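(* Let $N$ be a non-trivial Abelian group, $Q$ an infinite group, and $\alpha\colon Q\to \mathrm{Aut}(N)$ a homomorphism whose action is free outside $0$, i.e. if $q\in Q$ and $n\in N\setminus\{0\}$ satisfy $\alpha(q)(n)=n$ then $q=1$. Let $\Gamma=N\rtimes_\alpha Q$ and suppose $\Gamma$ is finitely generated. Then $N$ is infinite and the extension $0\to N\to\Gamma\to Q\to 1$ is acentral (i.e. $N$ is an acentral subgroup of $\Gamma$). In particular, $\Gamma$ is not presentable by a product.
   Context: A subgroup $A$ of a group $\Gamma$ is called acentral if for every $g\in A\setminus\{1\}$ the centraliser $C_\Gamma(g)$ is contained in $A$; an extension $1\to N\to\Gamma\to Q\to 1$ is acentral if $N$ is acentral in $\Gamma$. An infinite group $\Gamma$ is not presentable by a product if for every homomorphism $\varphi\colon \Gamma_1\times\Gamma_2\to\Gamma$ whose image has finite index in $\Gamma$, at least one of $\varphi(\Gamma_1)$, $\varphi(\Gamma_2)$ is finite. *)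

theory Defs
  imports "HOL-Algebra.Algebra"
begin

definition semidirect_prod ::
  "('a, 'm) monoid_scheme \<Rightarrow> ('b, 'n) monoid_scheme \<Rightarrow> ('b \<Rightarrow> 'a \<Rightarrow> 'a) \<Rightarrow> ('a \<times> 'b) monoid" where
  "semidirect_prod N Q \<alpha> =
     \<lparr>carrier = carrier N \<times> carrier Q,
      monoid.mult = (\<lambda>(n1, q1) (n2, q2). (n1 \<otimes>\<^bsub>N\<^esub> \<alpha> q1 n2, q1 \<otimes>\<^bsub>Q\<^esub> q2)),
      one = (\<one>\<^bsub>N\<^esub>, \<one>\<^bsub>Q\<^esub>)\<rparr>"

definition normal_factor ::
  "('a, 'm) monoid_scheme \<Rightarrow> ('b, 'n) monoid_scheme \<Rightarrow> ('a \<times> 'b) set" where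
  "normal_factor N Q = carrier N \<times> {\<one>\<^bsub>Q\<^esub>}"

definition centraliser :: "('a, 'm) monoid_scheme \<Rightarrow> 'a \<Rightarrow> 'a set" where
  "centraliser G g = {h \<in> carrier G. h \<otimes>\<^bsub>G\<^esub> g = g \<otimes>\<^bsub>G\<^esub> h}"

definition acentral :: "('a, 'm) monoid_scheme \<Rightarrow> 'a set \<Rightarrow> bool" where
  "acentral G A \<longleftrightarrow> subgroup A G \<and> (\<forall>g \<in> A - {\<one>\<^bsub>G\<^esub>}. centraliser G g \<subseteq> A)"

definition finitely_generated_group :: "('a, 'm) monoid_scheme \<Rightarrow> bool" where
  "finitely_generated_group G \<longleftrightarrow>
     (\<exists>S. finite S \<and> S \<subseteq> carrier G \<and> generate G S = carrier G)"

definition product_presentation ::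
  "('a, 'm) monoid_scheme \<Rightarrow> ('c, 'd) monoid_scheme \<Rightarrow> ('e, 'f) monoid_scheme
     \<Rightarrow> ('c \<times> 'e \<Rightarrow> 'a) \<Rightarrow> bool" where
  "product_presentation \<Gamma> G1 G2 \<phi> \<longleftrightarrow>
     group G1 \<and> group G2 \<and> \<phi> \<in> hom (G1 \<times>\<times> G2) \<Gamma> \<and>
     finite (rcosets\<^bsub>\<Gamma>\<^esub> (\<phi> ` carrier (G1 \<times>\<times> G2)))"

end

theory Submission imports Defs begin

locale sdp =
  fixes N :: "('a, 'm) monoid_scheme" and Q :: "('b, 'n) monoid_scheme"
    and \<alpha> :: "'b \<Rightarrow> 'a \<Rightarrow> 'a"
  assumes Nc: "comm_group N" and Qg: "group Q" and ah: "\<alpha> \<in> hom Q (AutoGroup N)"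
begin

interpretation N: comm_group N by (rule Nc)
interpretation Q: group Q by (rule Qg)

lemma a_auto: "q \<in> carrier Q \<Longrightarrow> \<alpha> q \<in> auto N"
  using ah by (auto simp: hom_def AutoGroup_def)

lemma a_closed[simp]: "q \<in> carrier Q \<Longrightarrow> n \<in> carrier N \<Longrightarrow> \<alpha> q n \<in> carrier N"
  using a_auto by (auto simp: auto_def hom_def)

lemma a_mult: "q \<in> carrier Q \<Longrightarrow> x \<in> carrier N \<Longrightarrow> y \<in> carrier N \<Longrightarrow>
   \<alpha> q (x \<otimes>\<^bsub>N\<^esub> y) = \<alpha> q x \<otimes>\<^bsub>N\<^esub> \<alpha> q y"
  using a_auto by (auto simp: auto_def hom_def)

lemma a_comp: "p \<in> carrier Q \<Longrightarrow> q \<in> carrier Q \<Longrightarrow> n \<in> carrier N \<Longrightarrow>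
   \<alpha> (p \<otimes>\<^bsub>Q\<^esub> q) n = \<alpha> p (\<alpha> q n)"
proof -
  assume h: "p \<in> carrier Q" "q \<in> carrier Q" "n \<in> carrier N"
  have "\<alpha> (p \<otimes>\<^bsub>Q\<^esub> q) = \<alpha> p \<otimes>\<^bsub>AutoGroup N\<^esub> \<alpha> q"
    using ah h by (simp add: hom_mult)
  moreover have "\<alpha> p \<in> Bij (carrier N)" "\<alpha> q \<in> Bij (carrier N)"
    using a_auto h by (auto simp: auto_def)
  ultimately show ?thesis using h by (simp add: AutoGroup_def BijGroup_def compose_def)
qed

lemma a_one[simp]: "n \<in> carrier N \<Longrightarrow> \<alpha> \<one>\<^bsub>Q\<^esub> n = n"
proof -
  assume n: "n \<in> carrier N"
  have b: "\<alpha> \<one>\<^bsub>Q\<^esub> \<in> Bij (carrier N)" using a_auto by (auto simp: auto_def)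
  then have "inj_on (\<alpha> \<one>\<^bsub>Q\<^esub>) (carrier N)" by (auto simp: Bij_def bij_betw_def)
  moreover have "\<alpha> \<one>\<^bsub>Q\<^esub> (\<alpha> \<one>\<^bsub>Q\<^esub> n) = \<alpha> \<one>\<^bsub>Q\<^esub> n"
    using a_comp[of "\<one>\<^bsub>Q\<^esub>" "\<one>\<^bsub>Q\<^esub>" n] n by simp
  ultimately show ?thesis using n by (auto simp: inj_on_def)
qed

lemma a_oneN[simp]: "q \<in> carrier Q \<Longrightarrow> \<alpha> q \<one>\<^bsub>N\<^esub> = \<one>\<^bsub>N\<^esub>"
proof -
  assume q: "q \<in> carrier Q"
  have "\<alpha> q \<one>\<^bsub>N\<^esub> \<otimes>\<^bsub>N\<^esub> \<alpha> q \<one>\<^bsub>N\<^esub> = \<alpha> q \<one>\<^bsub>N\<^esub>"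
    using a_mult[OF q, of "\<one>\<^bsub>N\<^esub>" "\<one>\<^bsub>N\<^esub>"] by simp
  then show ?thesis using q by (metis N.one_closed N.r_one N.l_cancel a_closed)
qed

lemma a_inv: "q \<in> carrier Q \<Longrightarrow> n \<in> carrier N \<Longrightarrow> \<alpha> q (inv\<^bsub>N\<^esub> n) = inv\<^bsub>N\<^esub> (\<alpha> q n)"
proof -
  assume h: "q \<in> carrier Q" "n \<in> carrier N"
  have "\<alpha> q (inv\<^bsub>N\<^esub> n) \<otimes>\<^bsub>N\<^esub> \<alpha> q n = \<one>\<^bsub>N\<^esub>"
    using h a_mult[OF h(1), of "inv\<^bsub>N\<^esub> n" n] by simp
  then show ?thesis using h by (metis N.inv_equality N.inv_closed a_closed)
qed

abbreviation "G \<equiv> semidirect_prod N Q \<alpha>"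

lemma carrier_G[simp]: "carrier G = carrier N \<times> carrier Q"
  by (simp add: semidirect_prod_def)
lemma one_G[simp]: "\<one>\<^bsub>G\<^esub> = (\<one>\<^bsub>N\<^esub>, \<one>\<^bsub>Q\<^esub>)"
  by (simp add: semidirect_prod_def)
lemma mult_G[simp]: "(a, b) \<otimes>\<^bsub>G\<^esub> (c, d) = (a \<otimes>\<^bsub>N\<^esub> \<alpha> b c, b \<otimes>\<^bsub>Q\<^esub> d)"
  by (simp add: semidirect_prod_def)

lemma group_G: "group G"
proof (rule groupI)
  fix x y z assume "x \<in> carrier G" "y \<in> carrier G" "z \<in> carrier G"
  then obtain a b c d e f where xyz: "x = (a,b)" "y = (c,d)" "z = (e,f)"
    "a \<in> carrier N" "b \<in> carrier Q" "c \<in> carrier N" "d \<in> carrier Q" "e \<in> carrier N" "f \<in> carrier Q"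
    by auto
  then show "x \<otimes>\<^bsub>G\<^esub> y \<otimes>\<^bsub>G\<^esub> z = x \<otimes>\<^bsub>G\<^esub> (y \<otimes>\<^bsub>G\<^esub> z)"
    by (simp add: a_mult a_comp N.m_assoc Q.m_assoc)
next
  fix x assume "x \<in> carrier G"
  then obtain a b where x: "x = (a,b)" "a \<in> carrier N" "b \<in> carrier Q" by auto
  show "\<exists>y\<in>carrier G. y \<otimes>\<^bsub>G\<^esub> x = \<one>\<^bsub>G\<^esub>"
  proof (intro bexI)
    show "(\<alpha> (inv\<^bsub>Q\<^esub> b) (inv\<^bsub>N\<^esub> a), inv\<^bsub>Q\<^esub> b) \<otimes>\<^bsub>G\<^esub> x = \<one>\<^bsub>G\<^esub>"
      using x by (simp add: a_mult[symmetric])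
  qed (use x in simp)
qed (auto)

interpretation G: group G by (rule group_G)

lemma inv_G: "a \<in> carrier N \<Longrightarrow> b \<in> carrier Q \<Longrightarrow>
  inv\<^bsub>G\<^esub> (a, b) = (\<alpha> (inv\<^bsub>Q\<^esub> b) (inv\<^bsub>N\<^esub> a), inv\<^bsub>Q\<^esub> b)"
  by (rule G.inv_equality) (simp_all add: a_mult[symmetric])

lemma snd_hom: "snd \<in> hom G Q"
  by (auto simp: hom_def)

lemma NF_eq: "normal_factor N Q = {x \<in> carrier G. snd x = \<one>\<^bsub>Q\<^esub>}"
  by (auto simp: normal_factor_def)

lemma NF_sub: "subgroup (normal_factor N Q) G"
proof (rule G.subgroupI)
  show "normal_factor N Q \<subseteq> carrier G" by (auto simp: normal_factor_def)
  show "normal_factor N Q \<noteq> {}" by (auto simp: normal_factor_def)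
  show "\<And>a. a \<in> normal_factor N Q \<Longrightarrow> inv\<^bsub>G\<^esub> a \<in> normal_factor N Q"
    by (auto simp: normal_factor_def inv_G)
  show "\<And>a b. a \<in> normal_factor N Q \<Longrightarrow> b \<in> normal_factor N Q \<Longrightarrow> a \<otimes>\<^bsub>G\<^esub> b \<in> normal_factor N Q"
    by (auto simp: normal_factor_def)
qed

end

locale sdp_free = sdp +
  assumes free: "\<And>q n. q \<in> carrier Q \<Longrightarrow> n \<in> carrier N - {\<one>\<^bsub>N\<^esub>} \<Longrightarrow> \<alpha> q n = n
                 \<Longrightarrow> q = \<one>\<^bsub>Q\<^esub>"
begin
interpretation N: comm_group N by (rule Nc)
interpretation Q: group Q by (rule Qg)
interpretation G: group G by (rule group_G)

lemma acent: assumes g: "g \<in> normal_factor N Q" "g \<noteq> \<one>\<^bsub>G\<^esub>" and h: "h \<in> carrier G"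
  and c: "h \<otimes>\<^bsub>G\<^esub> g = g \<otimes>\<^bsub>G\<^esub> h"
  shows "h \<in> normal_factor N Q"
proof -
  obtain n where gn: "g = (n, \<one>\<^bsub>Q\<^esub>)" "n \<in> carrier N" "n \<noteq> \<one>\<^bsub>N\<^esub>"
    using g by (auto simp: normal_factor_def)
  obtain m q where hm: "h = (m,q)" "m \<in> carrier N" "q \<in> carrier Q" using h by auto
  have "m \<otimes>\<^bsub>N\<^esub> \<alpha> q n = n \<otimes>\<^bsub>N\<^esub> m" using c gn hm by simp
  then have "m \<otimes>\<^bsub>N\<^esub> \<alpha> q n = m \<otimes>\<^bsub>N\<^esub> n" using gn hm by (simp add: N.m_comm)
  then have "\<alpha> q n = n" using gn hm by (metis N.l_cancel a_closed)
  then have "q = \<one>\<^bsub>Q\<^esub>" using free gn hm by blast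
  then show ?thesis using hm by (simp add: normal_factor_def)
qed

lemma acentral: "acentral G (normal_factor N Q)"
  unfolding acentral_def centraliser_def using NF_sub acent by blast

lemma N_inf: assumes "carrier N \<noteq> {\<one>\<^bsub>N\<^esub>}" "infinite (carrier Q)"
  shows "infinite (carrier N)"
proof -
  obtain n0 where n0: "n0 \<in> carrier N" "n0 \<noteq> \<one>\<^bsub>N\<^esub>" using assms(1) N.one_closed by blast
  have "inj_on (\<lambda>q. \<alpha> q n0) (carrier Q)"
  proof (rule inj_onI)
    fix p q assume pq: "p \<in> carrier Q" "q \<in> carrier Q" "\<alpha> p n0 = \<alpha> q n0"
    have "\<alpha> (inv\<^bsub>Q\<^esub> q \<otimes>\<^bsub>Q\<^esub> p) n0 = \<alpha> (inv\<^bsub>Q\<^esub> q) (\<alpha> q n0)"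
      using pq n0 by (simp add: a_comp)
    also have "\<dots> = \<alpha> (inv\<^bsub>Q\<^esub> q \<otimes>\<^bsub>Q\<^esub> q) n0"
      using pq n0 by (simp only: a_comp Q.inv_closed)
    also have "\<dots> = n0" using pq n0 by (simp add: Q.l_inv)
    finally have "inv\<^bsub>Q\<^esub> q \<otimes>\<^bsub>Q\<^esub> p = \<one>\<^bsub>Q\<^esub>" using free pq n0 by simp
    then show "p = q" using pq by (metis Q.inv_closed Q.inv_inv Q.inv_equality)
  qed
  moreover have "(\<lambda>q. \<alpha> q n0) ` carrier Q \<subseteq> carrier N" using n0 by auto
  ultimately show ?thesis using assms(2) by (metis finite_imageD finite_subset)
qed

lemma no_prod:
  fixes G1 :: "('x1, 'y1) monoid_scheme" and G2 :: "('x2, 'y2) monoid_scheme" and \<phi>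
  assumes Ninf: "infinite (carrier N)" and Qinf: "infinite (carrier Q)"
    and pp: "product_presentation G G1 G2 \<phi>"
  shows "finite (\<phi> ` (carrier G1 \<times> {\<one>\<^bsub>G2\<^esub>})) \<or> finite (\<phi> ` ({\<one>\<^bsub>G1\<^esub>} \<times> carrier G2))"
proof (rule ccontr)
  define A where "A = \<phi> ` (carrier G1 \<times> {\<one>\<^bsub>G2\<^esub>})"
  define B where "B = \<phi> ` ({\<one>\<^bsub>G1\<^esub>} \<times> carrier G2)"
  define H where "H = \<phi> ` carrier (G1 \<times>\<times> G2)"
  define NF where "NF = normal_factor N Q"
  assume "\<not> ?thesis"
  then have Ainf: "infinite A" and Binf: "infinite B" by (auto simp: A_def B_def)
  have g1: "group G1" and g2: "group G2" and hm: "\<phi> \<in> hom (G1 \<times>\<times> G2) G"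
    and fin: "finite (rcosets\<^bsub>G\<^esub> H)"
    using pp by (auto simp: product_presentation_def H_def)
  interpret G1: group G1 by (rule g1)
  interpret G2: group G2 by (rule g2)
  interpret P: group "G1 \<times>\<times> G2" by (simp add: DirProd_group g1 g2)
  interpret h: group_hom "G1 \<times>\<times> G2" G \<phi>
    by (simp add: group_hom_def group_hom_axioms_def hm DirProd_group g1 g2 group_G)
  interpret S: group_hom G Q snd
    by (simp add: group_hom_def group_hom_axioms_def snd_hom group_G Qg)
  have HG: "H \<subseteq> carrier G" unfolding H_def using h.hom_closed by blast
  have oneH: "\<one>\<^bsub>G\<^esub> \<in> H"
  proof -
    have "\<phi> (\<one>\<^bsub>G1\<^esub>, \<one>\<^bsub>G2\<^esub>) = \<one>\<^bsub>G\<^esub>" using h.hom_one by simp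
    then show ?thesis unfolding H_def by force
  qed
  have clo: "\<And>x y. x \<in> carrier G1 \<Longrightarrow> y \<in> carrier G2 \<Longrightarrow> \<phi> (x, y) \<in> carrier G"
    using h.hom_closed by simp
  have split: "\<And>x y. x \<in> carrier G1 \<Longrightarrow> y \<in> carrier G2 \<Longrightarrow>
       \<phi> (x, y) = \<phi> (x, \<one>\<^bsub>G2\<^esub>) \<otimes>\<^bsub>G\<^esub> \<phi> (\<one>\<^bsub>G1\<^esub>, y)"
  proof -
    fix x y assume xy: "x \<in> carrier G1" "y \<in> carrier G2"
    show "\<phi> (x, y) = \<phi> (x, \<one>\<^bsub>G2\<^esub>) \<otimes>\<^bsub>G\<^esub> \<phi> (\<one>\<^bsub>G1\<^esub>, y)"
      using h.hom_mult[of "(x, \<one>\<^bsub>G2\<^esub>)" "(\<one>\<^bsub>G1\<^esub>, y)"] xy by simp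
  qed
  have comm: "\<And>x y. x \<in> carrier G1 \<Longrightarrow> y \<in> carrier G2 \<Longrightarrow>
       \<phi> (x, \<one>\<^bsub>G2\<^esub>) \<otimes>\<^bsub>G\<^esub> \<phi> (\<one>\<^bsub>G1\<^esub>, y) = \<phi> (\<one>\<^bsub>G1\<^esub>, y) \<otimes>\<^bsub>G\<^esub> \<phi> (x, \<one>\<^bsub>G2\<^esub>)"
  proof -
    fix x y assume xy: "x \<in> carrier G1" "y \<in> carrier G2"
    have "\<phi> (\<one>\<^bsub>G1\<^esub>, y) \<otimes>\<^bsub>G\<^esub> \<phi> (x, \<one>\<^bsub>G2\<^esub>) = \<phi> (x, y)"
      using h.hom_mult[of "(\<one>\<^bsub>G1\<^esub>, y)" "(x, \<one>\<^bsub>G2\<^esub>)"] xy by simp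
    then show "\<phi> (x, \<one>\<^bsub>G2\<^esub>) \<otimes>\<^bsub>G\<^esub> \<phi> (\<one>\<^bsub>G1\<^esub>, y) = \<phi> (\<one>\<^bsub>G1\<^esub>, y) \<otimes>\<^bsub>G\<^esub> \<phi> (x, \<one>\<^bsub>G2\<^esub>)"
      using split[OF xy] by simp
  qed
  have NFsub: "subgroup NF G" using NF_sub by (simp add: NF_def)
  have "\<exists>x\<in>H. x \<in> NF \<and> x \<noteq> \<one>\<^bsub>G\<^esub>"
  proof (rule ccontr)
    assume nx: "\<not> ?thesis"
    have "inj_on (\<lambda>n. H #>\<^bsub>G\<^esub> (n, \<one>\<^bsub>Q\<^esub>)) (carrier N)"
    proof (rule inj_onI)
      fix n n' assume nn: "n \<in> carrier N" "n' \<in> carrier N"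
        and eq: "H #>\<^bsub>G\<^esub> (n, \<one>\<^bsub>Q\<^esub>) = H #>\<^bsub>G\<^esub> (n', \<one>\<^bsub>Q\<^esub>)"
      have "(n, \<one>\<^bsub>Q\<^esub>) \<in> H #>\<^bsub>G\<^esub> (n, \<one>\<^bsub>Q\<^esub>)"
        using oneH nn unfolding r_coset_def by force
      then obtain k where k: "k \<in> H" "(n, \<one>\<^bsub>Q\<^esub>) = k \<otimes>\<^bsub>G\<^esub> (n', \<one>\<^bsub>Q\<^esub>)"
        using eq unfolding r_coset_def by auto
      then obtain m q where mq: "k = (m, q)" "m \<in> carrier N" "q \<in> carrier Q" using HG by auto
      then have "q = \<one>\<^bsub>Q\<^esub>" "n = m \<otimes>\<^bsub>N\<^esub> n'" using k nn by auto
      then have "k \<in> NF" using mq by (simp add: NF_def normal_factor_def)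
      then have "k = \<one>\<^bsub>G\<^esub>" using nx k by blast
      then show "n = n'" using k nn by simp
    qed
    moreover have "(\<lambda>n. H #>\<^bsub>G\<^esub> (n, \<one>\<^bsub>Q\<^esub>)) ` carrier N \<subseteq> rcosets\<^bsub>G\<^esub> H"
      unfolding RCOSETS_def by auto
    ultimately show False using fin Ninf by (metis finite_imageD finite_subset)
  qed
  then obtain g1 g2 where gg: "g1 \<in> carrier G1" "g2 \<in> carrier G2" "\<phi> (g1, g2) \<in> NF"
    "\<phi> (g1, g2) \<noteq> \<one>\<^bsub>G\<^esub>" unfolding H_def by auto
  have AtoB: "B \<subseteq> NF" if a0h: "a0 \<in> A" "a0 \<in> NF" "a0 \<noteq> \<one>\<^bsub>G\<^esub>" for a0
  proof
    fix b assume "b \<in> B"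
    then obtain y where y: "y \<in> carrier G2" "b = \<phi> (\<one>\<^bsub>G1\<^esub>, y)" by (auto simp: B_def)
    obtain x where x: "x \<in> carrier G1" "a0 = \<phi> (x, \<one>\<^bsub>G2\<^esub>)" using a0h by (auto simp: A_def)
    show "b \<in> NF" using acent[of a0 b] a0h x y comm clo by (simp add: NF_def)
  qed
  have BtoA: "A \<subseteq> NF" if b0h: "b0 \<in> B" "b0 \<in> NF" "b0 \<noteq> \<one>\<^bsub>G\<^esub>" for b0
  proof
    fix a assume "a \<in> A"
    then obtain x where x: "x \<in> carrier G1" "a = \<phi> (x, \<one>\<^bsub>G2\<^esub>)" by (auto simp: A_def)
    obtain y where y: "y \<in> carrier G2" "b0 = \<phi> (\<one>\<^bsub>G1\<^esub>, y)" using b0h by (auto simp: B_def)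
    show "a \<in> NF" using acent[of b0 a] b0h x y comm clo by (simp add: NF_def)
  qed
  have ntA: "\<exists>a\<in>A. a \<noteq> \<one>\<^bsub>G\<^esub>"
  proof (rule ccontr)
    assume "\<not> ?thesis" then have "A \<subseteq> {\<one>\<^bsub>G\<^esub>}" by auto
    then show False using Ainf finite_subset by blast
  qed
  have ntB: "\<exists>b\<in>B. b \<noteq> \<one>\<^bsub>G\<^esub>"
  proof (rule ccontr)
    assume "\<not> ?thesis" then have "B \<subseteq> {\<one>\<^bsub>G\<^esub>}" by auto
    then show False using Binf finite_subset by blast
  qed
  show False
  proof (cases "(\<exists>a0\<in>A. a0 \<in> NF \<and> a0 \<noteq> \<one>\<^bsub>G\<^esub>) \<or> (\<exists>b0\<in>B. b0 \<in> NF \<and> b0 \<noteq> \<one>\<^bsub>G\<^esub>)")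
    case True
    then have AB: "A \<subseteq> NF" "B \<subseteq> NF" using AtoB BtoA ntA ntB by blast+
    have HNF: "H \<subseteq> NF"
    proof
      fix z assume "z \<in> H"
      then obtain x y where xy: "x \<in> carrier G1" "y \<in> carrier G2" "z = \<phi> (x, y)"
        by (auto simp: H_def)
      have "\<phi> (x, \<one>\<^bsub>G2\<^esub>) \<in> NF" "\<phi> (\<one>\<^bsub>G1\<^esub>, y) \<in> NF"
        using AB xy by (auto simp: A_def B_def)
      then show "z \<in> NF" using xy split[OF xy(1,2)] subgroup.m_closed[OF NFsub] by simp
    qed
    have "inj_on (\<lambda>q. H #>\<^bsub>G\<^esub> (\<one>\<^bsub>N\<^esub>, q)) (carrier Q)"
    proof (rule inj_onI)
      fix q q' assume qq: "q \<in> carrier Q" "q' \<in> carrier Q"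
        and eq: "H #>\<^bsub>G\<^esub> (\<one>\<^bsub>N\<^esub>, q) = H #>\<^bsub>G\<^esub> (\<one>\<^bsub>N\<^esub>, q')"
      have "(\<one>\<^bsub>N\<^esub>, q) \<in> H #>\<^bsub>G\<^esub> (\<one>\<^bsub>N\<^esub>, q)"
        using oneH qq unfolding r_coset_def by force
      then obtain k where k: "k \<in> H" "(\<one>\<^bsub>N\<^esub>, q) = k \<otimes>\<^bsub>G\<^esub> (\<one>\<^bsub>N\<^esub>, q')"
        using eq unfolding r_coset_def by auto
      then obtain m where "k = (m, \<one>\<^bsub>Q\<^esub>)" "m \<in> carrier N"
        using HNF by (auto simp: NF_def normal_factor_def)
      then show "q = q'" using k qq by simp
    qed
    moreover have "(\<lambda>q. H #>\<^bsub>G\<^esub> (\<one>\<^bsub>N\<^esub>, q)) ` carrier Q \<subseteq> rcosets\<^bsub>G\<^esub> H"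
      unfolding RCOSETS_def by auto
    ultimately show False using fin Qinf by (metis finite_imageD finite_subset)
  next
    case False
    define a where "a = \<phi> (g1, \<one>\<^bsub>G2\<^esub>)"
    define b where "b = \<phi> (\<one>\<^bsub>G1\<^esub>, g2)"
    have ab: "a \<in> carrier G" "b \<in> carrier G" using clo gg by (auto simp: a_def b_def)
    have x: "\<phi> (g1, g2) = a \<otimes>\<^bsub>G\<^esub> b" using split[OF gg(1,2)] by (simp add: a_def b_def)
    have sab: "snd a \<otimes>\<^bsub>Q\<^esub> snd b = \<one>\<^bsub>Q\<^esub>"
      using gg x ab S.hom_mult by (auto simp: NF_def normal_factor_def)
    have "A \<subseteq> {\<one>\<^bsub>G\<^esub>}"
    proof
      fix a' assume "a' \<in> A"
      then obtain y where y: "y \<in> carrier G1" "a' = \<phi> (y, \<one>\<^bsub>G2\<^esub>)" by (auto simp: A_def)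
      have a'c: "a' \<in> carrier G" using clo y by simp
      have "a' \<otimes>\<^bsub>G\<^esub> b = b \<otimes>\<^bsub>G\<^esub> a'" using comm y gg by (simp add: b_def)
      then have sc: "snd a' \<otimes>\<^bsub>Q\<^esub> snd b = snd b \<otimes>\<^bsub>Q\<^esub> snd a'"
        using S.hom_mult ab a'c by metis
      have sac: "snd a \<otimes>\<^bsub>Q\<^esub> snd a' = snd a' \<otimes>\<^bsub>Q\<^esub> snd a"
      proof -
        have q: "snd a \<in> carrier Q" "snd b \<in> carrier Q" "snd a' \<in> carrier Q"
          using ab a'c by auto
        have rp: "snd b \<otimes>\<^bsub>Q\<^esub> snd a = \<one>\<^bsub>Q\<^esub>"
          using sab q by (metis Q.inv_equality Q.r_inv)
        have "snd b \<otimes>\<^bsub>Q\<^esub> (snd a \<otimes>\<^bsub>Q\<^esub> snd a') = snd a'"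
          using rp q by (simp add: Q.m_assoc[symmetric])
        also have "\<dots> = snd a' \<otimes>\<^bsub>Q\<^esub> (snd b \<otimes>\<^bsub>Q\<^esub> snd a)"
          using rp q by simp
        also have "\<dots> = snd b \<otimes>\<^bsub>Q\<^esub> (snd a' \<otimes>\<^bsub>Q\<^esub> snd a)"
          using sc q by (simp add: Q.m_assoc[symmetric])
        finally show ?thesis using q by (meson Q.l_cancel Q.m_closed)
      qed
      define w where "w = inv\<^bsub>G1\<^esub> (g1 \<otimes>\<^bsub>G1\<^esub> y) \<otimes>\<^bsub>G1\<^esub> (y \<otimes>\<^bsub>G1\<^esub> g1)"
      have w: "w \<in> carrier G1" using y gg by (simp add: w_def)
      define c where "c = \<phi> (w, \<one>\<^bsub>G2\<^esub>)"
      have cc: "c \<in> carrier G" using clo w by (simp add: c_def)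
      have d: "\<phi> (y \<otimes>\<^bsub>G1\<^esub> g1, \<one>\<^bsub>G2\<^esub>) = a' \<otimes>\<^bsub>G\<^esub> a"
        using h.hom_mult[of "(y, \<one>\<^bsub>G2\<^esub>)" "(g1, \<one>\<^bsub>G2\<^esub>)"] y gg by (simp add: a_def)
      have e: "\<phi> (g1 \<otimes>\<^bsub>G1\<^esub> y, \<one>\<^bsub>G2\<^esub>) = a \<otimes>\<^bsub>G\<^esub> a'"
        using h.hom_mult[of "(g1, \<one>\<^bsub>G2\<^esub>)" "(y, \<one>\<^bsub>G2\<^esub>)"] y gg by (simp add: a_def)
      have "(g1 \<otimes>\<^bsub>G1\<^esub> y) \<otimes>\<^bsub>G1\<^esub> w = y \<otimes>\<^bsub>G1\<^esub> g1"
        using y gg by (simp add: w_def G1.m_assoc[symmetric])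
      then have ec: "(a \<otimes>\<^bsub>G\<^esub> a') \<otimes>\<^bsub>G\<^esub> c = a' \<otimes>\<^bsub>G\<^esub> a"
        using h.hom_mult[of "(g1 \<otimes>\<^bsub>G1\<^esub> y, \<one>\<^bsub>G2\<^esub>)" "(w, \<one>\<^bsub>G2\<^esub>)"] y gg w d e
        by (simp add: c_def)
      have "snd (a \<otimes>\<^bsub>G\<^esub> a') \<otimes>\<^bsub>Q\<^esub> snd c = snd ((a \<otimes>\<^bsub>G\<^esub> a') \<otimes>\<^bsub>G\<^esub> c)"
        using S.hom_mult[OF G.m_closed[OF ab(1) a'c] cc] by simp
      also have "\<dots> = snd a' \<otimes>\<^bsub>Q\<^esub> snd a" using ec ab a'c by (simp add: S.hom_mult)
      also have "\<dots> = snd (a \<otimes>\<^bsub>G\<^esub> a')" using sac ab a'c by (simp add: S.hom_mult)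
      also have "\<dots> = snd (a \<otimes>\<^bsub>G\<^esub> a') \<otimes>\<^bsub>Q\<^esub> \<one>\<^bsub>Q\<^esub>"
        using ab a'c by simp
      finally have "snd c = \<one>\<^bsub>Q\<^esub>" using ab a'c cc
        by (meson G.m_closed Q.l_cancel Q.one_closed S.hom_closed)
      then have "c \<in> NF" using cc by (simp add: NF_eq NF_def)
      moreover have "c \<in> A" using w by (simp add: c_def A_def)
      ultimately have "c = \<one>\<^bsub>G\<^esub>" using False by blast
      then have aa: "a \<otimes>\<^bsub>G\<^esub> a' = a' \<otimes>\<^bsub>G\<^esub> a" using ec ab a'c by (metis G.m_closed G.r_one one_G)
      have ba: "a' \<otimes>\<^bsub>G\<^esub> b = b \<otimes>\<^bsub>G\<^esub> a'" by fact
      have "a' \<otimes>\<^bsub>G\<^esub> (a \<otimes>\<^bsub>G\<^esub> b) = (a' \<otimes>\<^bsub>G\<^esub> a) \<otimes>\<^bsub>G\<^esub> b"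
        using ab a'c by (simp only: G.m_assoc)
      also have "\<dots> = (a \<otimes>\<^bsub>G\<^esub> a') \<otimes>\<^bsub>G\<^esub> b" using aa by simp
      also have "\<dots> = a \<otimes>\<^bsub>G\<^esub> (a' \<otimes>\<^bsub>G\<^esub> b)" using ab a'c by (simp only: G.m_assoc)
      also have "\<dots> = a \<otimes>\<^bsub>G\<^esub> (b \<otimes>\<^bsub>G\<^esub> a')" using ba by simp
      also have "\<dots> = (a \<otimes>\<^bsub>G\<^esub> b) \<otimes>\<^bsub>G\<^esub> a'" using ab a'c by (simp only: G.m_assoc)
      finally have "a' \<otimes>\<^bsub>G\<^esub> (a \<otimes>\<^bsub>G\<^esub> b) = (a \<otimes>\<^bsub>G\<^esub> b) \<otimes>\<^bsub>G\<^esub> a'" .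
      then have "a' \<in> NF" using acent[of "\<phi> (g1, g2)" a'] gg x a'c by (simp add: NF_def)
      then show "a' \<in> {\<one>\<^bsub>G\<^esub>}" using False \<open>a' \<in> A\<close> by blast
    qed
    then show False using Ainf finite_subset by blast
  qed
qed

end
theorem corollary3p5:
  fixes N :: "('a, 'm) monoid_scheme" and Q :: "('b, 'n) monoid_scheme"
    and \<alpha> :: "'b \<Rightarrow> 'a \<Rightarrow> 'a"
  assumes N_abelian: "comm_group N"
    and N_nontrivial: "carrier N \<noteq> {\<one>\<^bsub>N\<^esub>}"
    and Q_group: "group Q"
    and Q_infinite: "infinite (carrier Q)"
    and \<alpha>_hom: "\<alpha> \<in> hom Q (AutoGroup N)"
    and free: "\<And>q n. q \<in> carrier Q \<Longrightarrow> n \<in> carrier N - {\<one>\<^bsub>N\<^esub>} \<Longrightarrow> \<alpha> q n = n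
                 \<Longrightarrow> q = \<one>\<^bsub>Q\<^esub>"
    and fg: "finitely_generated_group (semidirect_prod N Q \<alpha>)"
  shows "infinite (carrier N)
    \<and> acentral (semidirect_prod N Q \<alpha>) (normal_factor N Q)
    \<and> infinite (carrier (semidirect_prod N Q \<alpha>))
    \<and> (\<forall>(G1 :: ('c, 'd) monoid_scheme) (G2 :: ('e, 'f) monoid_scheme) \<phi>.
          product_presentation (semidirect_prod N Q \<alpha>) G1 G2 \<phi> \<longrightarrow>
            finite (\<phi> ` (carrier G1 \<times> {\<one>\<^bsub>G2\<^esub>})) \<or> finite (\<phi> ` ({\<one>\<^bsub>G1\<^esub>} \<times> carrier G2)))"
proof -
  interpret sdp_free N Q \<alpha>
    by (rule sdp_free.intro[OF sdp.intro[OF N_abelian Q_group \<alpha>_hom]], rule sdp_free_axioms.intro)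
       (rule free, auto)
  have Ninf: "infinite (carrier N)" using N_inf N_nontrivial Q_infinite by blast
  moreover have "infinite (carrier (semidirect_prod N Q \<alpha>))"
  proof
    assume "finite (carrier (semidirect_prod N Q \<alpha>))"
    then have "finite (carrier N \<times> carrier Q)" by simp
    moreover have "carrier Q \<noteq> {}" using Q_infinite by auto
    ultimately show False using Ninf finite_cartesian_productD1 by blast
  qed
  ultimately show ?thesis
    apply (intro conjI allI impI)
       apply (simp_all add: acentral)
    apply (erule no_prod[OF Ninf Q_infinite])
    done
qed

end
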